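(* If $G$ is a graph with $n$ vertices and $m$ edges and $\vec{G}$ is any orientation of $G$, then $$Mo(G)\geq nm-2\sum_{(v,u)\in E(\vec{G})}\bar{n}_G(v,u).$$
   Context: All graphs are finite and simple. For a graph $G$ and an edge $uv$ of $G$, $n_G(u,v)$ denotes the number of vertices of $G$ whose distance in $G$ to $u$ is smaller than their distance to $v$, and $\bar{n}_G(v,u)=n-n_G(u,v)$, i.e. the number of vertices whose distance to $v$ is at most their distance to $u$. The Mostar index of $G$ is $Mo(G)=\sum_{uv\in E(G)}|n_G(u,v)-n_G(v,u)|$. An orientation $\vec{G}$ replaces each edge $uv$ by exactly one of the arcs $(u,v)$, $(v,u)$. *)

theory Defs
  imports Main "HOL-Library.Extended_Nat"
begin

definition simple_graph :: "'a set \<Rightarrow> 'a set set \<Rightarrow> bool" where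
  "simple_graph V E \<longleftrightarrow> finite V \<and>
     (\<forall>e\<in>E. \<exists>a b. e = {a, b} \<and> a \<noteq> b \<and> a \<in> V \<and> b \<in> V)"

definition is_walk :: "'a set \<Rightarrow> 'a set set \<Rightarrow> 'a list \<Rightarrow> bool" where
  "is_walk V E xs \<longleftrightarrow> xs \<noteq> [] \<and> set xs \<subseteq> V \<and>
     (\<forall>i. Suc i < length xs \<longrightarrow> {xs ! i, xs ! Suc i} \<in> E)"

text \<open>Graph distance; infinite if no walk exists.\<close>
definition gdist :: "'a set \<Rightarrow> 'a set set \<Rightarrow> 'a \<Rightarrow> 'a \<Rightarrow> enat" where
  "gdist V E u v = Inf {enat (length xs - 1) | xs. is_walk V E xs \<and> hd xs = u \<and> last xs = v}"

definition nG :: "'a set \<Rightarrow> 'a set set \<Rightarrow> 'a \<Rightarrow> 'a \<Rightarrow> nat" where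
  "nG V E u v = card {w \<in> V. gdist V E w u < gdist V E w v}"

definition nbarG :: "'a set \<Rightarrow> 'a set set \<Rightarrow> 'a \<Rightarrow> 'a \<Rightarrow> int" where
  "nbarG V E v u = int (card V) - int (nG V E u v)"

definition mostar :: "'a set \<Rightarrow> 'a set set \<Rightarrow> int" where
  "mostar V E = (\<Sum>e\<in>E. (THE x. \<exists>u v. e = {u, v} \<and> x = \<bar>int (nG V E u v) - int (nG V E v u)\<bar>))"

definition orientation :: "'a set set \<Rightarrow> ('a \<times> 'a) set \<Rightarrow> bool" where
  "orientation E A \<longleftrightarrow> (\<forall>(a, b)\<in>A. {a, b} \<in> E) \<and>
     (\<forall>a b. {a, b} \<in> E \<longrightarrow> ((a, b) \<in> A \<longleftrightarrow> (b, a) \<notin> A))"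

end

theory Submission
  imports Defs
begin

lemma the_val:
  "(THE x. \<exists>u v. {a, b} = {u, v} \<and> x = \<bar>int (nG V E u v) - int (nG V E v u)\<bar>)
   = \<bar>int (nG V E a b) - int (nG V E b a)\<bar>"
proof (rule the_equality)
  fix x assume "\<exists>u v. {a, b} = {u, v} \<and> x = \<bar>int (nG V E u v) - int (nG V E v u)\<bar>"
  then obtain u v where "{a, b} = {u, v}" "x = \<bar>int (nG V E u v) - int (nG V E v u)\<bar>" by blast
  then show "x = \<bar>int (nG V E a b) - int (nG V E b a)\<bar>"
    by (auto simp: doubleton_eq_iff abs_minus_commute)
qed blast

lemma nG_sum:
  assumes "finite V"
  shows "nG V E a b + nG V E b a \<le> card V"
proof -
  have "nG V E a b + nG V E b a = card ({w \<in> V. gdist V E w a < gdist V E w b} \<union> {w \<in> V. gdist V E w b < gdist V E w a})"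
    unfolding nG_def using assms by (subst card_Un_disjoint) auto
  also have "\<dots> \<le> card V" using assms by (intro card_mono) auto
  finally show ?thesis .
qed

theorem lemma1:
  fixes V :: "'a set" and E :: "'a set set" and A :: "('a \<times> 'a) set"
  assumes "simple_graph V E"
    and "orientation E A"
  shows "mostar V E \<ge> int (card V) * int (card E) - 2 * (\<Sum>(v, u)\<in>A. nbarG V E v u)"
proof -
  have fV: "finite V" and Ed: "\<And>e. e \<in> E \<Longrightarrow> \<exists>a b. e = {a, b} \<and> a \<noteq> b \<and> a \<in> V \<and> b \<in> V"
    using assms(1) unfolding simple_graph_def by auto
  have A1: "\<And>a b. (a, b) \<in> A \<Longrightarrow> {a, b} \<in> E"
    and A2: "\<And>a b. {a, b} \<in> E \<Longrightarrow> ((a, b) \<in> A \<longleftrightarrow> (b, a) \<notin> A)"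
    using assms(2) unfolding orientation_def by auto
  have AV: "A \<subseteq> V \<times> V"
  proof
    fix p assume "p \<in> A"
    then obtain a b where p: "p = (a, b)" "(a, b) \<in> A" by (cases p) auto
    from Ed[OF A1[OF p(2)]] obtain x y where "{a, b} = {x, y}" "x \<in> V" "y \<in> V" by blast
    then show "p \<in> V \<times> V" using p by (auto simp: doubleton_eq_iff)
  qed
  have fA: "finite A" using AV fV finite_subset by blast
  define g where "g = (\<lambda>(a::'a, b::'a). {a, b})"
  have inj: "inj_on g A"
  proof (rule inj_onI)
    fix p q assume "p \<in> A" "q \<in> A" "g p = g q"
    then obtain a b c d where pq: "p = (a, b)" "q = (c, d)" "(a,b) \<in> A" "(c,d) \<in> A" "{a,b} = {c,d}"
      unfolding g_def by (cases p, cases q) auto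
    show "p = q"
    proof (cases "a = c \<and> b = d")
      case True then show ?thesis using pq by auto
    next
      case False
      then have "c = b" "d = a" using pq(5) by (auto simp: doubleton_eq_iff)
      then show ?thesis using pq A2[OF A1[OF pq(3)]] by auto
    qed
  qed
  have img: "g ` A = E"
  proof
    show "g ` A \<subseteq> E" using A1 unfolding g_def by auto
  next
    show "E \<subseteq> g ` A"
    proof
      fix e assume "e \<in> E"
      then obtain a b where e: "e = {a, b}" using Ed by blast
      show "e \<in> g ` A"
      proof (cases "(a, b) \<in> A")
        case True then show ?thesis unfolding g_def e by force
      next
        case False
        then have "(b, a) \<in> A" using A2 \<open>e \<in> E\<close> e by blast
        then have "g (b, a) \<in> g ` A" by blast
        then show ?thesis unfolding g_def e by (simp add: insert_commute)
      qed
    qed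
  qed
  define f where "f = (\<lambda>e. (THE x. \<exists>u v. e = {u, v} \<and> x = \<bar>int (nG V E u v) - int (nG V E v u)\<bar>))"
  have mo: "mostar V E = (\<Sum>p\<in>A. f (g p))"
    unfolding mostar_def f_def[symmetric] using sum.reindex[OF inj, of f] img by simp
  have cE: "card E = card A" using card_image[OF inj] img by simp
  have "int (card V) * int (card E) - 2 * (\<Sum>(v, u)\<in>A. nbarG V E v u)
      = (\<Sum>p\<in>A. int (card V) - 2 * (case p of (v, u) \<Rightarrow> nbarG V E v u))"
    by (simp add: cE sum_subtractf sum_distrib_left)
  also have "\<dots> \<le> (\<Sum>p\<in>A. f (g p))"
  proof (rule sum_mono)
    fix p assume "p \<in> A"
    obtain v u where p: "p = (v, u)" by (cases p)
    have "f (g p) = \<bar>int (nG V E v u) - int (nG V E u v)\<bar>"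
      unfolding f_def g_def p by (simp add: the_val)
    moreover have "nG V E v u + nG V E u v \<le> card V" using nG_sum[OF fV] .
    ultimately show "int (card V) - 2 * (case p of (v, u) \<Rightarrow> nbarG V E v u) \<le> f (g p)"
      unfolding p nbarG_def by simp
  qed
  finally show ?thesis using mo by simp
qed

end
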